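(* The $(3,3)$ Padé approximant of the exponential, \[ \psi_{36}(z)=\frac{1+\frac z2+\frac{z^2}{10}+\frac{z^3}{120}}{1-\frac z2+\frac{z^2}{10}-\frac{z^3}{120}}, \] which is the unique element of $\Pi_{3/3,6}$ (normalized so that numerator and denominator take the value $1$ at $0$), satisfies \[ R(\psi_{36})=-2+\sqrt[3]{4}\left(\sqrt[3]{3-\sqrt5}+\sqrt[3]{3+\sqrt5}\right)\approx 2.207606, \] i.e. the unique real root of $x^3+6x^2-40=0$. Hence $R_{3/3,6}$ equals this number.
   Context: A real rational function $\psi$ is always considered in lowest terms, as a smooth function on $\mathbb{R}$ minus its finitely many poles. It is absolutely monotonic at $x\in\mathbb{R}$ if $x$ is not a pole and $\psi^{(k)}(x)\ge 0$ for all integers $k\ge 0$. The radius of absolute monotonicity is $R(\psi)=\sup\big(\{r\in[0,\infty): \psi \text{ is absolutely monotonic at each point of } [-r,0]\}\cup\{0\}\big)\in[0,+\infty]$. For $m,n,p\in\mathbb{N}$, $\Pi_{m/n,p}$ denotes the set of rational functions $\psi=P/Q$ with $P,Q$ real polynomials, $\deg P\le m$, $Q\not\equiv 0$, $\deg Q\le n$, such that $\psi(z)-e^z=O(z^{p+1})$ as $z\to 0$. Finally, $R_{m/n,p}=\sup\{R(\psi):\psi\in\Pi_{m/n,p}\}$. *)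

theory Defs
  imports "HOL-Analysis.Analysis" "HOL-Computational_Algebra.Computational_Algebra"
    "HOL-Library.Landau_Symbols" "HOL-Computational_Algebra.Field_as_Ring"
begin

text \<open>A real rational function psi = P/Q is represented by a pair of real polynomials
  (P, Q) with Q nonzero.\<close>

definition rnum :: "real poly \<Rightarrow> real poly \<Rightarrow> real poly" where
  "rnum P Q = P div gcd P Q"

definition rden :: "real poly \<Rightarrow> real poly \<Rightarrow> real poly" where
  "rden P Q = Q div gcd P Q"

definition ratfun :: "real poly \<Rightarrow> real poly \<Rightarrow> real \<Rightarrow> real" where
  "ratfun P Q = (\<lambda>t. poly (rnum P Q) t / poly (rden P Q) t)"

definition is_pole :: "real poly \<Rightarrow> real poly \<Rightarrow> real \<Rightarrow> bool" where
  "is_pole P Q x \<longleftrightarrow> poly (rden P Q) x = 0"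

definition abs_monotonic_at :: "real poly \<Rightarrow> real poly \<Rightarrow> real \<Rightarrow> bool" where
  "abs_monotonic_at P Q x \<longleftrightarrow>
     \<not> is_pole P Q x \<and> (\<forall>k::nat. (deriv ^^ k) (ratfun P Q) x \<ge> 0)"

definition radius_am :: "real poly \<Rightarrow> real poly \<Rightarrow> ereal" where
  "radius_am P Q = Sup (ereal ` ({r. r \<ge> 0 \<and> (\<forall>x\<in>{-r..0}. abs_monotonic_at P Q x)} \<union> {0}))"

definition Pi_class :: "nat \<Rightarrow> nat \<Rightarrow> nat \<Rightarrow> (real poly \<times> real poly) set" where
  "Pi_class m n p = {(P, Q). degree P \<le> m \<and> Q \<noteq> 0 \<and> degree Q \<le> n \<and>
       (\<lambda>z. ratfun P Q z - exp z) \<in> O[at 0](\<lambda>z. z ^ (p + 1))}"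

definition R_opt :: "nat \<Rightarrow> nat \<Rightarrow> nat \<Rightarrow> ereal" where
  "R_opt m n p = Sup ((\<lambda>(P, Q). radius_am P Q) ` Pi_class m n p)"

definition psi36_num :: "real poly" where
  "psi36_num = [:1, 1/2, 1/10, 1/120:]"

definition psi36_den :: "real poly" where
  "psi36_den = [:1, -1/2, 1/10, -1/120:]"

end

theory Submission
  imports Defs "HOL-Real_Asymp.Real_Asymp"
begin

lemma gen_deriv_pow_inv:
  fixes q C :: "'a::{real_normed_field}"
  assumes "q \<noteq> z"
  shows "((\<lambda>w. C / (q - w) ^ n) has_field_derivative (of_nat n * C / (q - z) ^ Suc n)) (at z)"
proof -
  have nz: "q - z \<noteq> 0" using assms by simp
  have D: "((\<lambda>w. C * inverse (q - w) ^ n) has_field_derivative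
          C * (of_nat n * inverse (q - z) ^ (n - 1) * (inverse (q - z) * inverse (q - z)))) (at z)"
    using nz by (auto intro!: derivative_eq_intros)
  moreover have E: "C * (of_nat n * inverse (q - z) ^ (n - 1) * (inverse (q - z) * inverse (q - z)))
      = of_nat n * C / (q - z) ^ Suc n"
  proof (cases n)
    case 0 then show ?thesis by simp
  next
    case (Suc m)
    then show ?thesis using nz by (simp add: field_simps power_inverse)
  qed
  moreover have F: "(\<lambda>w. C * inverse (q - w) ^ n) = (\<lambda>w. C / (q-w)^n)"
    by (simp add: divide_inverse power_inverse)
  ultimately show ?thesis by metis
qed

lemma cderiv_pow_inv:
  fixes q C :: complex
  assumes "q \<noteq> of_real x"
  shows "((\<lambda>t::real. Re (C / (q - of_real t) ^ n)) has_real_derivative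
           Re (of_nat n * C / (q - of_real x) ^ Suc n)) (at x)"
  using has_field_derivative_Re[OF has_vector_derivative_real_field[OF gen_deriv_pow_inv[OF assms]]]
  by simp

lemma rderiv_pow_inv:
  fixes p A :: real
  assumes "p \<noteq> x"
  shows "((\<lambda>t::real. A / (p - t) ^ n) has_real_derivative (of_nat n * A / (p - x) ^ Suc n)) (at x)"
  using gen_deriv_pow_inv[OF assms] by simp

lemma lagrange3:
  fixes a b c z r0 r2 :: complex
  assumes "a \<noteq> b" "a \<noteq> c" "b \<noteq> c" "z \<noteq> a" "z \<noteq> b" "z \<noteq> c"
  shows "(r0 + r2 * z^2) / ((z - a) * (z - b) * (z - c)) =
     (r0 + r2 * a^2) / ((a - b) * (a - c) * (z - a)) +
     (r0 + r2 * b^2) / ((b - a) * (b - c) * (z - b)) +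
     (r0 + r2 * c^2) / ((c - a) * (c - b) * (z - c))"
proof -
  define P where "P = (a-b)*(a-c)*(b-c)*((z-a)*(z-b)*(z-c))"
  have nz: "a - b \<noteq> 0" "a - c \<noteq> 0" "b - c \<noteq> 0" "z - a \<noteq> 0" "z - b \<noteq> 0" "z - c \<noteq> 0"
    using assms by auto
  have Pnz: "P \<noteq> 0" unfolding P_def using nz by simp
  have ta: "(r0 + r2 * a^2) / ((a - b) * (a - c) * (z - a)) = ((r0 + r2*a^2)*((b-c)*(z-b)*(z-c))) / P"
  proof -
    have w: "(b-c)*(z-b)*(z-c) \<noteq> 0" using nz by simp
    have "(r0 + r2 * a^2) / ((a - b) * (a - c) * (z - a)) =
      ((r0 + r2*a^2)*((b-c)*(z-b)*(z-c))) / (((a - b) * (a - c) * (z - a)) * ((b-c)*(z-b)*(z-c)))"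
      using w by (rule mult_divide_mult_cancel_right[symmetric])
    also have "((a - b) * (a - c) * (z - a)) * ((b-c)*(z-b)*(z-c)) = P" unfolding P_def by (simp only: ac_simps)
    finally show ?thesis .
  qed
  have tb: "(r0 + r2 * b^2) / ((b - a) * (b - c) * (z - b)) = ((r0 + r2*b^2)*(- ((a-c)*(z-a)*(z-c)))) / P"
  proof -
    have w: "- ((a-c)*(z-a)*(z-c)) \<noteq> 0" using nz by simp
    have "(r0 + r2 * b^2) / ((b - a) * (b - c) * (z - b)) =
      ((r0 + r2*b^2)*(- ((a-c)*(z-a)*(z-c)))) / (((b - a) * (b - c) * (z - b)) * (- ((a-c)*(z-a)*(z-c))))"
      using w by (rule mult_divide_mult_cancel_right[symmetric])
    also have "((b - a) * (b - c) * (z - b)) * (- ((a-c)*(z-a)*(z-c))) = P" unfolding P_def by (simp add: algebra_simps)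
    finally show ?thesis .
  qed
  have tc: "(r0 + r2 * c^2) / ((c - a) * (c - b) * (z - c)) = ((r0 + r2*c^2)*((a-b)*(z-a)*(z-b))) / P"
  proof -
    have w: "(a-b)*(z-a)*(z-b) \<noteq> 0" using nz by simp
    have "(r0 + r2 * c^2) / ((c - a) * (c - b) * (z - c)) =
      ((r0 + r2*c^2)*((a-b)*(z-a)*(z-b))) / (((c - a) * (c - b) * (z - c)) * ((a-b)*(z-a)*(z-b)))"
      using w by (rule mult_divide_mult_cancel_right[symmetric])
    also have "((c - a) * (c - b) * (z - c)) * ((a-b)*(z-a)*(z-b)) = P" unfolding P_def by (simp add: algebra_simps)
    finally show ?thesis .
  qed
  have tl: "(r0 + r2 * z^2) / ((z - a) * (z - b) * (z - c)) = ((r0 + r2*z^2)*((a-b)*(a-c)*(b-c))) / P"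
  proof -
    have w: "(a-b)*(a-c)*(b-c) \<noteq> 0" using nz by simp
    have "(r0 + r2 * z^2) / ((z - a) * (z - b) * (z - c)) =
      ((r0 + r2*z^2)*((a-b)*(a-c)*(b-c))) / (((z - a) * (z - b) * (z - c)) * ((a-b)*(a-c)*(b-c)))"
      using w by (rule mult_divide_mult_cancel_right[symmetric])
    also have "((z - a) * (z - b) * (z - c)) * ((a-b)*(a-c)*(b-c)) = P" unfolding P_def by (simp only: ac_simps)
    finally show ?thesis .
  qed
  have e: "(r0 + r2*z^2)*((a-b)*(a-c)*(b-c)) = (r0 + r2*a^2)*((b-c)*(z-b)*(z-c)) + (r0 + r2*b^2)*(- ((a-c)*(z-a)*(z-c)))
       + (r0 + r2*c^2)*((a-b)*(z-a)*(z-b))"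
    by (simp add: algebra_simps power2_eq_square)
  show ?thesis unfolding ta tb tc tl e by (simp add: add_divide_distrib diff_divide_distrib)
qed

lemma aux_sign: fixes c r u z q :: complex shows "c * (r / (u * (z - q))) = - ((c * r / u) / (q - z))"
proof (cases "u = 0 \<or> q = z")
  case True then show ?thesis by auto
next
  case False
  then have "u \<noteq> 0" "q - z \<noteq> 0" "z - q \<noteq> 0" by auto
  then show ?thesis by (simp add: field_simps)
qed

lemma cnj_sum: "w + cnj w = complex_of_real (Re (2 * w))"
  by (simp add: complex_eq_iff)

locale pp =
  fixes p :: real
  assumes fp: "p^3 - 12*p^2 + 60*p - 120 = 0" and plo: "464/100 < p" and phi: "p < 465/100"
begin

definition "al = (12 - p)/2"
definition "be = sqrt ((3*p^2 - 24*p + 96)/4)"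
definition "q = Complex al be"
definition "AA = 120 * (2 + p^2/5) / (3*p^2 - 24*p + 60)"
definition "BB = 120 * (2 + (1/5) * q^2) / ((q - of_real p) * (q - cnj q))"
definition "x0 = 4*(p-5)/(p-4)"

lemma pos96: "3*p^2 - 24*p + 96 > 0"
proof -
  have "3*p^2 - 24*p + 96 = 3*(p-4)^2 + 48" by (simp add: power2_eq_square algebra_simps)
  then show ?thesis by (smt (verit) zero_le_power2)
qed

lemma be2: "be^2 = (3*p^2 - 24*p + 96)/4"
  unfolding be_def using pos96 by simp

lemma be_sq: "be * be = (3*p^2 - 24*p + 96)/4"
  using be2 by (simp add: power2_eq_square)

lemma be_pos: "be > 0"
  unfolding be_def using pos96 by simp

lemma q_nonreal: "q \<noteq> of_real x"
  using be_pos by (auto simp: q_def complex_eq_iff)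

lemma q_sum: "q + cnj q = of_real (12 - p)"
  by (simp add: q_def complex_eq_iff al_def)

lemma q_prod: "q * cnj q = of_real (p^2 - 12*p + 60)"
  by (simp add: q_def complex_eq_iff al_def be_sq power2_eq_square field_simps)

lemma Dfact: "1 - x/2 + x^2/10 - x^3/120 = - (x - p) * (x^2 + (p - 12)*x + (p^2 - 12*p + 60)) / 120"
proof -
  have "p*(p^2 - 12*p + 60) = 120" using fp by (simp add: algebra_simps power2_eq_square power3_eq_cube)
  then show ?thesis by (simp add: algebra_simps power2_eq_square power3_eq_cube)
qed

lemma quad_pos: "x^2 + (p - 12)*x + (p^2 - 12*p + 60) > 0"
proof -
  have "x^2 + (p - 12)*x + (p^2 - 12*p + 60) = (x - al)^2 + be^2"
    by (simp add: be_sq al_def power2_eq_square field_simps)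
  then show ?thesis using be_pos by (smt (verit) zero_le_power2 zero_less_power)
qed

lemma D_zero_iff: "1 - x/2 + x^2/10 - x^3/120 = 0 \<longleftrightarrow> x = p"
  using quad_pos[of x] unfolding Dfact by auto

lemma cquad: "(z - q) * (z - cnj q) = z^2 + of_real (p - 12) * z + of_real (p^2 - 12*p + 60)"
proof -
  have "(z - q) * (z - cnj q) = z^2 - z * (q + cnj q) + q * cnj q" by (simp add: algebra_simps power2_eq_square)
  also have "\<dots> = z^2 + of_real (p - 12) * z + of_real (p^2 - 12*p + 60)"
    unfolding q_sum q_prod by (simp add: algebra_simps)
  finally show ?thesis .
qed

lemma pq_prod: "(of_real p - q) * (of_real p - cnj q) = of_real (3*p^2 - 24*p + 60)"
  unfolding cquad by (simp add: power2_eq_square algebra_simps)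

lemma partial_frac:
  assumes "x \<noteq> p"
  shows "(1 + x/2 + x^2/10 + x^3/120) / (1 - x/2 + x^2/10 - x^3/120) =
         -1 + AA / (p - x) + Re (2 * BB / (q - of_real x))"
proof -
  define z where "z = complex_of_real x"
  define a where "a = complex_of_real p"
  have Dne: "1 - x/2 + x^2/10 - x^3/120 \<noteq> 0" using D_zero_iff assms by simp
  have e1: "(1 + x/2 + x^2/10 + x^3/120) / (1 - x/2 + x^2/10 - x^3/120)
       = -1 - 120 * (2 + x^2/5) / ((x - p) * (x^2 + (p - 12)*x + (p^2 - 12*p + 60)))"
  proof -
    have "(1 + x/2 + x^2/10 + x^3/120) = -(1 - x/2 + x^2/10 - x^3/120) + (2 + x^2/5)" by simp
    then have "(1 + x/2 + x^2/10 + x^3/120) / (1 - x/2 + x^2/10 - x^3/120)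
      = -1 + (2 + x^2/5) / (1 - x/2 + x^2/10 - x^3/120)" using Dne by (simp add: field_simps)
    also have "\<dots> = -1 - 120 * (2 + x^2/5) / ((x - p) * (x^2 + (p - 12)*x + (p^2 - 12*p + 60)))"
    proof -
      have g: "\<And>y w::real. y / (- w / 120) = - (120 * y) / w" by (simp add: field_simps)
      show ?thesis unfolding Dfact minus_mult_left[symmetric] g by (simp add: minus_divide_left del: divide_minus_left)
    qed
    finally show ?thesis .
  qed
  have ab: "a \<noteq> q" "a \<noteq> cnj q" "q \<noteq> cnj q" "z \<noteq> a" "z \<noteq> q" "z \<noteq> cnj q"
    using q_nonreal assms be_pos
    by (auto simp: a_def z_def complex_eq_iff q_def)
  have L: "(2 + (1/5) * z^2) / ((z - a) * (z - q) * (z - cnj q)) =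
     (2 + (1/5) * a^2) / ((a - q) * (a - cnj q) * (z - a)) +
     (2 + (1/5) * q^2) / ((q - a) * (q - cnj q) * (z - q)) +
     (2 + (1/5) * (cnj q)^2) / ((cnj q - a) * (cnj q - q) * (z - cnj q))"
    by (rule lagrange3) (use ab in auto)
  have c1: "complex_of_real (120 * (2 + x^2/5) / ((x - p) * (x^2 + (p - 12)*x + (p^2 - 12*p + 60))))
      = 120 * ((2 + (1/5) * z^2) / ((z - a) * (z - q) * (z - cnj q)))"
    by (simp add: z_def a_def cquad mult.assoc)
  have t1: "120 * ((2 + (1/5) * a^2) / ((a - q) * (a - cnj q) * (z - a))) = - of_real (AA / (p - x))"
  proof -
    have E1: "(a - q) * (a - cnj q) * (z - a) = of_real ((3*p^2 - 24*p + 60) * (x - p))"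
      using pq_prod by (simp add: a_def z_def)
    have E2: "120 * (2 + (1/5) * a^2) = of_real (120 * (2 + (1/5) * p^2))"
      by (simp add: a_def)
    have E3: "(120 * (2 + (1/5) * p^2)) / ((3*p^2 - 24*p + 60) * (x - p)) = - (AA / (p - x))"
    proof -
      have "x - p = - (p - x)" by simp
      then show ?thesis unfolding AA_def divide_divide_eq_left by (simp only: mult_minus_right divide_minus_right) simp
    qed
    have "120 * ((2 + (1/5) * a^2) / ((a - q) * (a - cnj q) * (z - a)))
        = (120 * (2 + (1/5) * a^2)) / ((a - q) * (a - cnj q) * (z - a))" by simp
    also have "\<dots> = of_real ((120 * (2 + (1/5) * p^2)) / ((3*p^2 - 24*p + 60) * (x - p)))"
      unfolding E1 E2 of_real_divide ..
    also have "\<dots> = - of_real (AA / (p - x))" unfolding E3 by simp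
    finally show ?thesis .
  qed
  have t2: "120 * ((2 + (1/5) * q^2) / ((q - a) * (q - cnj q) * (z - q))) = - (BB / (q - z))"
    unfolding BB_def a_def by (rule aux_sign)
  have t3: "120 * ((2 + (1/5) * (cnj q)^2) / ((cnj q - a) * (cnj q - q) * (z - cnj q))) = - cnj (BB / (q - z))"
  proof -
    have "cnj (BB / (q - z)) = cnj BB / (cnj q - z)" by (simp add: z_def)
    moreover have "cnj BB = 120 * (2 + (1/5) * (cnj q)^2) / ((cnj q - a) * (cnj q - q))"
      unfolding BB_def a_def by simp
    ultimately show ?thesis by (simp only: aux_sign)
  qed
  have "complex_of_real ((1 + x/2 + x^2/10 + x^3/120) / (1 - x/2 + x^2/10 - x^3/120))
     = -1 + of_real (AA / (p - x)) + (BB / (q - z) + cnj (BB / (q - z)))"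
  proof -
    have "complex_of_real ((1 + x/2 + x^2/10 + x^3/120) / (1 - x/2 + x^2/10 - x^3/120))
      = -1 - complex_of_real (120 * (2 + x^2/5) / ((x - p) * (x^2 + (p - 12)*x + (p^2 - 12*p + 60))))"
      unfolding e1 by simp
    also have "\<dots> = -1 - 120 * ((2 + (1/5) * z^2) / ((z - a) * (z - q) * (z - cnj q)))"
      unfolding c1 ..
    also have "\<dots> = -1 - (120 * ((2 + (1/5) * a^2) / ((a - q) * (a - cnj q) * (z - a))) +
     120 * ((2 + (1/5) * q^2) / ((q - a) * (q - cnj q) * (z - q))) +
     120 * ((2 + (1/5) * (cnj q)^2) / ((cnj q - a) * (cnj q - q) * (z - cnj q))))"
      unfolding L by (simp only: distrib_left)
    also have "\<dots> = -1 + of_real (AA / (p - x)) + (BB / (q - z) + cnj (BB / (q - z)))"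
      unfolding t1 t2 t3 by simp
    finally show ?thesis .
  qed
  also have "BB / (q - z) + cnj (BB / (q - z)) = of_real (Re (2 * BB / (q - z)))"
    using cnj_sum[of "BB / (q - z)"] by simp
  finally have "complex_of_real ((1 + x/2 + x^2/10 + x^3/120) / (1 - x/2 + x^2/10 - x^3/120))
     = complex_of_real (-1 + AA / (p - x) + Re (2 * BB / (q - z)))" by simp
  then show ?thesis unfolding z_def by (simp only: of_real_eq_iff)
qed

end

lemma poly_num: "poly psi36_num t = 1 + t/2 + t^2/10 + t^3/120"
  by (simp add: psi36_num_def algebra_simps power2_eq_square power3_eq_cube)
lemma poly_den: "poly psi36_den t = 1 - t/2 + t^2/10 - t^3/120"
  by (simp add: psi36_den_def algebra_simps power2_eq_square power3_eq_cube)

lemma coprime_psi: "gcd psi36_num psi36_den = 1"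
proof -
  have e: "[:1/2, -3/25, 1/100:] * psi36_num + [:1/2, 3/25, 1/100:] * psi36_den = (1::real poly)"
    unfolding psi36_num_def psi36_den_def by (simp add: algebra_simps)
  have "gcd psi36_num psi36_den dvd 1"
    by (metis e dvd_add dvd_mult gcd_dvd1 gcd_dvd2)
  then show ?thesis by (simp add: is_unit_gcd)
qed

lemma rnum_psi: "rnum psi36_num psi36_den = psi36_num"
  unfolding rnum_def coprime_psi by simp
lemma rden_psi: "rden psi36_num psi36_den = psi36_den"
  unfolding rden_def coprime_psi by simp

lemma ratfun_psi: "ratfun psi36_num psi36_den = (\<lambda>t. (1 + t/2 + t^2/10 + t^3/120) / (1 - t/2 + t^2/10 - t^3/120))"
  unfolding ratfun_def rnum_psi rden_psi poly_num poly_den ..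

lemma is_pole_psi: "is_pole psi36_num psi36_den x \<longleftrightarrow> 1 - x/2 + x^2/10 - x^3/120 = 0"
  unfolding is_pole_def rden_psi poly_den ..

context pp begin

definition "T k x = AA / (p - x)^(Suc k) + Re (2 * BB / (q - of_real x)^(Suc k))"
definition "G k x = (if k = 0 then -1 else 0) + fact k * T k x"

lemma G_deriv:
  assumes "x \<noteq> p"
  shows "(G k has_real_derivative G (Suc k) x) (at x)"
proof -
  have d1: "((\<lambda>t. AA / (p - t)^(Suc k)) has_real_derivative (of_nat (Suc k) * AA / (p - x) ^ Suc (Suc k))) (at x)"
    using assms by (intro rderiv_pow_inv) auto
  have d2: "((\<lambda>t. Re (2 * BB / (q - of_real t)^(Suc k))) has_real_derivative
       Re (of_nat (Suc k) * (2 * BB) / (q - of_real x) ^ Suc (Suc k))) (at x)"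
    by (rule cderiv_pow_inv) (rule q_nonreal)
  have "((\<lambda>t. (if k = 0 then -1 else 0) + fact k * T k t) has_real_derivative
     0 + fact k * ((of_nat (Suc k) * AA / (p - x) ^ Suc (Suc k)) + Re (of_nat (Suc k) * (2 * BB) / (q - of_real x) ^ Suc (Suc k)))) (at x)"
    unfolding T_def by (rule DERIV_add[OF DERIV_const DERIV_cmult[OF DERIV_add[OF d1 d2]]])
  moreover have "0 + fact k * ((of_nat (Suc k) * AA / (p - x) ^ Suc (Suc k)) + Re (of_nat (Suc k) * (2 * BB) / (q - of_real x) ^ Suc (Suc k)))
     = G (Suc k) x"
  proof -
    define W where "W = (q - of_real x) ^ Suc (Suc k)"
    define u where "u = AA / (p - x) ^ Suc (Suc k)"
    define v where "v = Re (2 * BB / W)"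
    have h1: "of_nat (Suc k) * AA / (p - x) ^ Suc (Suc k) = real (Suc k) * u" unfolding u_def by simp
    have h2: "Re (of_nat (Suc k) * (2 * BB) / W) = real (Suc k) * v"
    proof -
      have e: "of_nat (Suc k) * (2 * BB) / W = complex_of_real (real (Suc k)) * (2 * BB / W)" by simp
      show ?thesis unfolding v_def e by (simp only: times_complex.sel Im_complex_of_real Re_complex_of_real mult_zero_left diff_zero)
    qed
    have "G (Suc k) x = fact (Suc k) * (u + v)" unfolding G_def T_def u_def v_def W_def by simp
    then show ?thesis unfolding W_def[symmetric] h1 h2 by (simp add: algebra_simps)
  qed
  moreover have eqG: "G k = (\<lambda>t. (if k = 0 then -1 else 0) + fact k * T k t)" by (rule ext) (simp add: G_def)
  ultimately show ?thesis by (simp only:)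
qed

lemma G0: "x \<noteq> p \<Longrightarrow> ratfun psi36_num psi36_den x = G 0 x"
  unfolding ratfun_psi G_def T_def using partial_frac by simp

lemma iter_deriv: "x \<noteq> p \<Longrightarrow> (deriv ^^ k) (ratfun psi36_num psi36_den) x = G k x"
proof (induction k arbitrary: x)
  case 0 then show ?case using G0 by simp
next
  case (Suc k)
  have ev: "eventually (\<lambda>y. (deriv ^^ k) (ratfun psi36_num psi36_den) y = G k y) (nhds x)"
  proof -
    have "eventually (\<lambda>y. y \<in> - {p}) (nhds x)"
      using Suc.prems by (intro eventually_nhds_in_open) auto
    then show ?thesis by eventually_elim (use Suc.IH in auto)
  qed
  have "(deriv ^^ Suc k) (ratfun psi36_num psi36_den) x = deriv ((deriv ^^ k) (ratfun psi36_num psi36_den)) x"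
    by simp
  also have "\<dots> = deriv (G k) x" by (rule deriv_cong_ev[OF ev refl])
  also have "\<dots> = G (Suc k) x" by (rule DERIV_imp_deriv[OF G_deriv[OF Suc.prems]])
  finally show ?case .
qed

end

context pp begin

lemma key_ineq:
  "(2 + (al^2 - be^2)/5)^2 * (3*p^2 - 24*p + 60) + (2*al*be/5)^2 * (3*p^2 - 24*p + 60)
     < (2 + p^2/5)^2 * be^2"
proof -
  define u where "u = p - 4"
  have u: "64/100 < u" "u < 65/100" using plo phi by (auto simp: u_def)
  have u2: "(64/100)^2 < u^2" "u^2 < (65/100)^2"
    using u by (auto intro!: power_strict_mono)
  have p2: "(464/100)^2 < p^2" "p^2 < (465/100)^2"
    using plo phi by (auto intro!: power_strict_mono)
  have al: "735/200 < al" "al < 368/100" using plo phi by (auto simp: al_def)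
  have al2: "(735/200)^2 < al^2" "al^2 < (368/100)^2"
    using al by (auto intro!: power_strict_mono)
  have b2: "be^2 = (3*u^2 + 48)/4" unfolding be2 u_def by (simp add: power2_eq_square algebra_simps)
  have Qp: "3*p^2 - 24*p + 60 = 3*u^2 + 12" unfolding u_def by (simp add: power2_eq_square algebra_simps)
  have re: "2 + (al^2 - be^2)/5 = 22/5 - p^2/10"
    unfolding be2 al_def by (simp add: power2_eq_square field_simps)
  define Rl where "Rl = (2 + (464/100)^2/5 :: real)"
  define bl where "bl = ((3*(64/100)^2 + 48)/4 :: real)"
  define bu where "bu = ((3*(65/100)^2 + 48)/4 :: real)"
  define ql where "ql = (3*(65/100)^2 + 12 :: real)"
  define rr where "rr = (22/5 - (464/100)^2/10 :: real)"
  define au where "au = ((368/100)^2 :: real)"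
  have h1: "Rl \<le> 2 + p^2/5" unfolding Rl_def using p2 by simp
  have h1': "0 \<le> Rl" unfolding Rl_def by simp
  have h2: "bl \<le> be^2" "be^2 \<le> bu" unfolding b2 bl_def bu_def using u2 by auto
  have h3: "3*p^2 - 24*p + 60 \<le> ql" "0 \<le> 3*p^2 - 24*p + 60" unfolding Qp ql_def using u2 by auto
  have h4: "0 \<le> 22/5 - p^2/10" "22/5 - p^2/10 \<le> rr" unfolding rr_def using p2 by (auto simp: power2_eq_square)
  have h5: "(2*al*be/5)^2 = 4 * al^2 * be^2 / 25" by (simp add: power2_eq_square)
  have L: "Rl^2 * bl \<le> (2 + p^2/5)^2 * be^2"
    using h1 h1' h2 by (intro mult_mono power_mono) (auto simp: bl_def)
  have R1: "(22/5 - p^2/10)^2 \<le> rr^2" using h4 by (intro power_mono) auto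
  have R2: "al^2 * be^2 \<le> au * bu"
    using al2 h2 by (intro mult_mono) (auto simp: au_def)
  have R3: "(22/5 - p^2/10)^2 + 4 * al^2 * be^2 / 25 \<le> rr^2 + 4 * au * bu / 25"
    using R1 R2 by simp
  have R4: "((22/5 - p^2/10)^2 + 4 * al^2 * be^2 / 25) * (3*p^2 - 24*p + 60) \<le> (rr^2 + 4 * au * bu / 25) * ql"
    using R3 h3 by (intro mult_mono) (auto simp: rr_def au_def bu_def)
  have num: "(rr^2 + 4 * au * bu / 25) * ql < Rl^2 * bl"
    unfolding rr_def au_def bu_def ql_def Rl_def bl_def by (simp add: power2_eq_square)
  show ?thesis unfolding re h5 using R4 num L by (simp add: algebra_simps)
qed

end

lemma osc_identity:
  fixes z w :: complex
  assumes "cmod w = 1"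
  shows "(Re z)^2 + (Re (z * w))^2 - 2 * Re w * Re z * Re (z * w) = (cmod z)^2 * (Im w)^2"
proof -
  have w1: "(Re w)^2 + (Im w)^2 = 1" using assms cmod_power2[of w] by simp
  have "(Re z)^2 + (Re z * Re w - Im z * Im w)^2 - 2 * Re w * Re z * (Re z * Re w - Im z * Im w)
      = ((Re z)^2 + (Im z)^2) * (Im w)^2"
    using w1 by algebra
  then show ?thesis by (simp add: cmod_power2)
qed

lemma osc_fail:
  fixes B w :: complex and A r :: real
  assumes w1: "cmod w = 1" and wi: "Im w \<noteq> 0" and B: "B \<noteq> 0" and r0: "0 \<le> r" and r1: "r < 1"
  shows "\<exists>j\<ge>2. Re (B * w^j) < - A * r^j"
proof (rule ccontr)
  assume "\<not> ?thesis"
  then have ge: "\<And>j. j \<ge> 2 \<Longrightarrow> Re (B * w^j) \<ge> - A * r^j" by (simp add: not_less)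
  define c where "c j = Re (B * w^j)" for j
  define K where "K = (cmod B)^2 * (Im w)^2"
  have Kpos: "K > 0" unfolding K_def using B wi by simp
  define d where "d = sqrt K"
  have dpos: "d > 0" unfolding d_def using Kpos by simp
  have pair: "d \<le> \<bar>c j\<bar> + \<bar>c (Suc j)\<bar>" for j
  proof -
    have cz: "cmod (B * w^j) = cmod B" using w1 by (simp add: norm_mult norm_power)
    have id: "(c j)^2 + (c (Suc j))^2 - 2 * Re w * c j * c (Suc j) = K"
    proof -
      have e2: "B * w ^ Suc j = B * w^j * w" by (simp add: power_Suc2 mult.assoc)
      from osc_identity[OF w1, of "B * w^j", unfolded cz]
      show ?thesis unfolding c_def e2 K_def .
    qed
    have rw: "\<bar>Re w\<bar> \<le> 1" using abs_Re_le_cmod[of w] w1 by simp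
    have "- 2 * Re w * c j * c (Suc j) \<le> 2 * \<bar>c j\<bar> * \<bar>c (Suc j)\<bar>"
    proof -
      have "\<bar>2 * Re w * c j * c (Suc j)\<bar> = 2 * \<bar>Re w\<bar> * (\<bar>c j\<bar> * \<bar>c (Suc j)\<bar>)"
        by (simp add: abs_mult)
      also have "\<dots> \<le> 2 * 1 * (\<bar>c j\<bar> * \<bar>c (Suc j)\<bar>)"
        using rw by (intro mult_right_mono mult_left_mono) auto
      finally show ?thesis by linarith
    qed
    then have "K \<le> (\<bar>c j\<bar> + \<bar>c (Suc j)\<bar>)^2"
      using id by (simp add: power2_eq_square algebra_simps)
    then show ?thesis unfolding d_def
      by (metis abs_ge_zero add_nonneg_nonneg real_sqrt_le_iff real_sqrt_abs abs_of_nonneg)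
  qed
  define e where "e = d / 8"
  have epos: "e > 0" unfolding e_def using dpos by simp
  have "(\<lambda>n. \<bar>A\<bar> * r^n) \<longlonglongrightarrow> \<bar>A\<bar> * 0"
    using r0 r1 by (intro tendsto_mult tendsto_const LIMSEQ_power_zero) auto
  then have "eventually (\<lambda>n. \<bar>A\<bar> * r^n < e) sequentially"
    using epos by (auto simp: order_tendsto_iff)
  then obtain N where N: "\<And>n. n \<ge> N \<Longrightarrow> \<bar>A\<bar> * r^n < e" by (auto simp: eventually_sequentially)
  define J where "J = max N 2"
  have cge: "c j \<ge> - e" if "j \<ge> J" for j
  proof -
    have "c j \<ge> - A * r^j" unfolding c_def using ge that by (simp add: J_def)
    moreover have "- A * r^j \<ge> - (\<bar>A\<bar> * r^j)" using r0 by (simp add: mult_right_mono)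
    moreover have "\<bar>A\<bar> * r^j < e" using N that by (simp add: J_def)
    ultimately show ?thesis by linarith
  qed
  have pairsum: "c j + c (Suc j) \<ge> d / 2" if "j \<ge> J" for j
  proof -
    have a1: "\<bar>c j\<bar> \<le> c j + 2 * e" using cge[OF that] epos by linarith
    have a2: "\<bar>c (Suc j)\<bar> \<le> c (Suc j) + 2 * e" using cge[of "Suc j"] that epos by linarith
    show ?thesis using pair[of j] a1 a2 unfolding e_def by linarith
  qed
  have lower: "(\<Sum>i<2*n. c (J + i)) \<ge> real n * (d / 2)" for n
  proof (induction n)
    case 0 then show ?case by simp
  next
    case (Suc n)
    have "(\<Sum>i<2*Suc n. c (J + i)) = (\<Sum>i<2*n. c (J + i)) + (c (J + 2*n) + c (Suc (J + 2*n)))"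
      by (simp add: algebra_simps)
    moreover have "c (J + 2*n) + c (Suc (J + 2*n)) \<ge> d / 2" by (rule pairsum) simp
    ultimately show ?case using Suc.IH by (simp add: algebra_simps)
  qed
  have wne: "w \<noteq> 1" using wi by auto
  define M where "M = cmod B * (2 / cmod (1 - w))"
  have upper: "(\<Sum>i<m. c (J + i)) \<le> M" for m
  proof -
    have "(\<Sum>i<m. c (J + i)) = Re (B * w^J * (\<Sum>i<m. w^i))"
      unfolding c_def by (simp add: sum_distrib_left power_add mult.assoc)
    also have "\<dots> \<le> cmod (B * w^J * (\<Sum>i<m. w^i))" by (rule complex_Re_le_cmod)
    also have "\<dots> = cmod B * cmod ((1 - w^m) / (1 - w))"
      using w1 wne by (simp add: norm_mult norm_power norm_divide sum_gp_strict)
    also have "cmod ((1 - w^m) / (1 - w)) \<le> 2 / cmod (1 - w)"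
    proof -
      have "cmod (1 - w^m) \<le> cmod (1::complex) + cmod (w^m)" by (rule norm_triangle_ineq4)
      also have "\<dots> = 2" using w1 by (simp add: norm_power)
      finally show ?thesis by (simp add: norm_divide divide_right_mono)
    qed
    then have "cmod B * cmod ((1 - w^m) / (1 - w)) \<le> M" unfolding M_def
      by (rule mult_left_mono) simp
    finally show ?thesis .
  qed
  obtain n :: nat where n: "real n > M / (d / 2)" using reals_Archimedean2 by blast
  have "real n * (d/2) > M" using n dpos by (simp add: field_simps)
  moreover have "real n * (d / 2) \<le> M" using lower[of n] upper[of "2*n"] by linarith
  ultimately show False by linarith
qed

context pp begin

lemma Qp_pos: "3*p^2 - 24*p + 60 > 0"
proof -
  have "3*p^2 - 24*p + 60 = 3*(p-4)^2 + 12" by (simp add: power2_eq_square algebra_simps)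
  then show ?thesis by (smt (verit) zero_le_power2)
qed

lemma AB: "2 * cmod BB \<le> AA"
proof -
  define Qp where "Qp = 3*p^2 - 24*p + 60"
  define s where "s = sqrt Qp"
  have Qp: "Qp > 0" unfolding Qp_def by (rule Qp_pos)
  have s: "s > 0" "s * s = Qp" unfolding s_def using Qp by auto
  define R where "R = 2 + (1/5) * q^2"
  have ReR: "Re R = 2 + (al^2 - be^2)/5" unfolding R_def q_def by (simp add: power2_eq_square)
  have ImR: "Im R = 2*al*be/5" unfolding R_def q_def by (simp add: power2_eq_square)
  have c1: "cmod (q - of_real p) = s"
  proof -
    have "(al - p)^2 + be^2 = Qp" unfolding Qp_def be2 al_def by (simp add: power2_eq_square field_simps)
    then show ?thesis unfolding s_def q_def cmod_def by simp
  qed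
  have c2: "cmod (q - cnj q) = 2 * be"
  proof -
    have "q - cnj q = Complex 0 (2*be)" unfolding q_def by (simp add: complex_eq_iff)
    then show ?thesis using be_pos by (simp add: cmod_def real_sqrt_mult)
  qed
  have cB: "cmod BB = 120 * cmod R / (s * (2 * be))"
    unfolding BB_def R_def[symmetric] by (simp add: norm_mult norm_divide c1 c2)
  have ki: "(cmod R)^2 * Qp < ((2 + p^2/5) * be)^2"
  proof -
    have e1: "(cmod R)^2 * Qp = (2 + (al^2 - be^2)/5)^2 * Qp + (2*al*be/5)^2 * Qp"
      unfolding cmod_power2 ReR ImR by (simp only: distrib_right)
    have e2: "((2 + p^2/5) * be)^2 = (2 + p^2/5)^2 * be^2" by (rule power_mult_distrib)
    show ?thesis unfolding e1 e2 unfolding Qp_def by (rule key_ineq)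
  qed
  have ki2: "cmod R * s < (2 + p^2/5) * be"
  proof -
    have "(cmod R * s)^2 = (cmod R)^2 * Qp"
      using s(2) by (simp add: power_mult_distrib power2_eq_square)
    then have "(cmod R * s)^2 < ((2 + p^2/5) * be)^2" using ki by simp
    moreover have "0 \<le> (2 + p^2/5) * be" using be_pos by simp
    ultimately show ?thesis by (rule power2_less_imp_less)
  qed
  have "2 * cmod BB = 120 * cmod R / (s * be)" unfolding cB using be_pos by simp
  also have "\<dots> \<le> 120 * (2 + p^2/5) / Qp"
  proof -
    have "cmod R * Qp \<le> (2 + p^2/5) * (s * be)"
    proof -
      have "cmod R * Qp = (cmod R * s) * s" using s by (simp add: mult.assoc)
      also have "\<dots> \<le> ((2 + p^2/5) * be) * s" using ki2 s by (intro mult_right_mono) auto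
      finally show ?thesis by (simp add: ac_simps)
    qed
    then show ?thesis using s be_pos Qp by (simp add: divide_simps) (simp add: algebra_simps)
  qed
  also have "\<dots> = AA" unfolding AA_def Qp_def ..
  finally show ?thesis .
qed

lemma AA_pos: "AA > 0" unfolding AA_def using Qp_pos
  by (intro divide_pos_pos mult_pos_pos) (auto intro: add_pos_nonneg)

lemma BB_nz: "BB \<noteq> 0"
proof -
  have "2 + (1/5) * q^2 \<noteq> 0"
  proof
    assume "2 + (1/5) * q^2 = 0"
    then have "Im (2 + (1/5) * q^2) = 0" by simp
    then have "al * be = 0" unfolding q_def by (simp add: power2_eq_square)
    moreover have "al > 0" unfolding al_def using phi by simp
    ultimately show False using be_pos by simp
  qed
  moreover have "q - of_real p \<noteq> 0" using q_nonreal by simp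
  moreover have "q - cnj q \<noteq> 0" using be_pos by (simp add: q_def complex_eq_iff)
  ultimately show ?thesis unfolding BB_def
    by (metis divide_eq_0_iff mult_eq_0_iff zero_neq_numeral)
qed

lemma cmod_qx2: "(cmod (q - of_real x))^2 = x^2 + (p - 12)*x + (p^2 - 12*p + 60)"
  unfolding cmod_power2 q_def al_def by (simp add: be_sq power2_eq_square field_simps)

lemma dist_cmp: "(cmod (q - of_real x))^2 - (p - x)^2 = (3*p - 12) * x + 60 - 12*p"
  unfolding cmod_qx2 by (simp add: power2_eq_square algebra_simps)

lemma x0_bounds: "-3 < x0" "x0 < 0"
  unfolding x0_def using plo phi by (auto simp: field_simps)

lemma T_nonneg:
  assumes "x0 \<le> x" "x \<le> 0"
  shows "T n x \<ge> 0"
proof -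
  define W where "W = q - of_real x"
  have px: "p - x > 0" using assms plo by simp
  have "(3*p - 12) * x \<ge> (3*p - 12) * x0" using assms plo by (intro mult_left_mono) auto
  also have "(3*p - 12) * x0 = 12*p - 60" unfolding x0_def using plo by (simp add: field_simps)
  finally have "(cmod W)^2 \<ge> (p - x)^2" using dist_cmp[of x] unfolding W_def by simp
  then have cw: "cmod W \<ge> p - x" using px by (simp add: abs_le_square_iff[symmetric] power2_le_iff_abs_le)
  have a3: "Re (2 * BB / W ^ Suc n) \<ge> - cmod (2 * BB / W ^ Suc n)"
    using abs_Re_le_cmod[of "2 * BB / W ^ Suc n"] by linarith
  have a4: "cmod (2 * BB / W ^ Suc n) = 2 * cmod BB / (cmod W) ^ Suc n"
    by (simp add: norm_divide norm_mult norm_power)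
  have a1: "2 * cmod BB / (cmod W) ^ Suc n \<le> AA / (cmod W) ^ Suc n"
    using AB by (intro divide_right_mono) auto
  have a2: "AA / (cmod W) ^ Suc n \<le> AA / (p - x) ^ Suc n"
    using AA_pos px cw by (intro divide_left_mono power_mono mult_pos_pos zero_less_power) auto
  have "Re (2 * BB / W ^ Suc n) \<ge> - (AA / (p - x) ^ Suc n)" using a1 a2 a3 a4 by linarith
  then show ?thesis unfolding T_def W_def by simp
qed

lemma T_fail:
  assumes "x < x0"
  shows "\<exists>n\<ge>1. T n x < 0"
proof -
  define W where "W = q - of_real x"
  define r where "r = cmod W"
  have Wnz: "W \<noteq> 0" unfolding W_def using q_nonreal by simp
  have rpos: "r > 0" unfolding r_def using Wnz by simp
  have px: "p - x > 0" using assms x0_bounds plo by simp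
  have "(3*p - 12) * x < (3*p - 12) * x0" using assms plo by (intro mult_strict_left_mono) auto
  also have "(3*p - 12) * x0 = 12*p - 60" unfolding x0_def using plo by (simp add: field_simps)
  finally have "r^2 < (p - x)^2" using dist_cmp[of x] unfolding W_def r_def by simp
  then have rlt: "r < p - x" using px rpos by (simp add: power2_less_imp_less)
  define w where "w = of_real r / W"
  have w1: "cmod w = 1" unfolding w_def r_def using Wnz by (simp add: norm_divide)
  have wi: "Im w \<noteq> 0"
  proof -
    have "Im W = be" unfolding W_def q_def by simp
    then have "Im w = - r * be / (cmod W)^2" unfolding w_def
      by (simp add: Im_divide cmod_power2)
    then show ?thesis using be_pos rpos Wnz by simp
  qed
  define \<rho> where "\<rho> = r / (p - x)"
  have rho: "0 \<le> \<rho>" "\<rho> < 1" unfolding \<rho>_def using rpos px rlt by auto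
  obtain j where j: "j \<ge> 2" "Re (2 * BB * w^j) < - AA * \<rho>^j"
    using osc_fail[OF w1 wi _ rho, of "2 * BB" AA] BB_nz by auto
  have invW: "2 * BB / W ^ j = (2 * BB * w^j) / of_real (r^j)"
    unfolding w_def using Wnz rpos by (simp add: field_simps power_divide)
  have "Re (2 * BB / W ^ j) = Re (2 * BB * w^j) / r^j"
    unfolding invW by (simp add: Re_divide_of_real)
  also have "\<dots> < (- AA * \<rho>^j) / r^j" using j rpos by (intro divide_strict_right_mono) auto
  also have "(- AA * \<rho>^j) / r^j = - (AA / (p - x)^j)"
    unfolding \<rho>_def using rpos px by (simp add: power_divide field_simps)
  finally have neg: "AA / (p - x)^j + Re (2 * BB / W ^ j) < 0" by simp
  obtain n where n: "j = Suc n" using j by (cases j) auto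
  have "n \<ge> 1" using j n by simp
  moreover have "T n x < 0" using neg unfolding T_def W_def n .
  ultimately show ?thesis by blast
qed

end

context pp begin

lemma N_pos: "(x::real) \<ge> -3 \<Longrightarrow> 1 + x/2 + x^2/10 + x^3/120 > 0"
proof -
  assume x: "x \<ge> -3"
  have "120 * (1 + x/2 + x^2/10 + x^3/120) = (x+4)^3 + 12*x + 56"
    by (simp add: power2_eq_square power3_eq_cube algebra_simps)
  moreover have "(x+4)^3 \<ge> 1"
  proof -
    have "(x+4)^3 \<ge> 1^3" using x by (intro power_mono) auto
    then show ?thesis by simp
  qed
  ultimately have "120 * (1 + x/2 + x^2/10 + x^3/120) > 0" using x by linarith
  then show ?thesis by simp
qed

lemma D_pos: "(x::real) \<le> 0 \<Longrightarrow> 1 - x/2 + x^2/10 - x^3/120 > 0"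
proof -
  assume x: "x \<le> 0"
  have "x^3 = (x*x)*x" by (simp add: power3_eq_cube)
  moreover have "(x*x)*x \<le> 0" using x by (intro mult_nonneg_nonpos) auto
  ultimately have "x^3 \<le> 0" by simp
  moreover have "x^2 \<ge> 0" by simp
  ultimately show ?thesis using x by linarith
qed

lemma AM_on: "x0 \<le> x \<Longrightarrow> x \<le> 0 \<Longrightarrow> abs_monotonic_at psi36_num psi36_den x"
proof -
  assume x: "x0 \<le> x" "x \<le> 0"
  have xp: "x \<noteq> p" using x plo by simp
  have np: "\<not> is_pole psi36_num psi36_den x"
    unfolding is_pole_psi using D_zero_iff xp by simp
  have "(deriv ^^ k) (ratfun psi36_num psi36_den) x \<ge> 0" for k
  proof (cases k)
    case 0
    have "ratfun psi36_num psi36_den x \<ge> 0"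
      unfolding ratfun_psi using N_pos[of x] D_pos[of x] x x0_bounds by simp
    then show ?thesis using 0 by simp
  next
    case (Suc m)
    have "G k x \<ge> 0" unfolding G_def using T_nonneg[OF x, of k] Suc by simp
    then show ?thesis using iter_deriv[OF xp] by simp
  qed
  then show ?thesis unfolding abs_monotonic_at_def using np by simp
qed

lemma AM_fail: "x < x0 \<Longrightarrow> \<not> abs_monotonic_at psi36_num psi36_den x"
proof
  assume x: "x < x0" and am: "abs_monotonic_at psi36_num psi36_den x"
  have xp: "x \<noteq> p" using x x0_bounds plo by simp
  obtain n where n: "n \<ge> 1" "T n x < 0" using T_fail[OF x] by blast
  have "G n x < 0" unfolding G_def using n by (simp add: mult_pos_neg)
  moreover have "(deriv ^^ n) (ratfun psi36_num psi36_den) x \<ge> 0"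
    using am unfolding abs_monotonic_at_def by blast
  ultimately show False using iter_deriv[OF xp] by simp
qed

lemma radius_psi: "radius_am psi36_num psi36_den = ereal (- x0)"
proof -
  define S where "S = {r. r \<ge> 0 \<and> (\<forall>x\<in>{-r..0}. abs_monotonic_at psi36_num psi36_den x)}"
  have inS: "- x0 \<in> S" unfolding S_def using x0_bounds AM_on by auto
  have le: "r \<le> - x0" if "r \<in> S" for r
  proof (rule ccontr)
    assume "\<not> r \<le> - x0"
    then have "- r < x0" by simp
    moreover have "- r \<in> {-r..0}" using that unfolding S_def by auto
    ultimately show False using that AM_fail unfolding S_def by blast
  qed
  have "Sup (ereal ` (S \<union> {0})) = ereal (- x0)"
  proof (rule Sup_eqI)
    fix y assume "y \<in> ereal ` (S \<union> {0})"
    then show "y \<le> ereal (- x0)" using le x0_bounds by auto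
  next
    fix y assume "\<And>z. z \<in> ereal ` (S \<union> {0}) \<Longrightarrow> z \<le> y"
    then show "ereal (- x0) \<le> y" using inS by auto
  qed
  then show ?thesis unfolding radius_am_def S_def .
qed

lemma x0_cubic: "(- x0)^3 + 6 * (- x0)^2 - 40 = 0"
proof -
  define r where "r = - x0"
  have p4: "p - 4 \<noteq> 0" using plo by simp
  have rp: "r * (p - 4) = 4 * (5 - p)" unfolding r_def x0_def using p4 by (simp add: field_simps)
  have "(p-4)^3 * (r^3 + 6*r^2 - 40) = (r*(p-4))^3 + 6*(r*(p-4))^2*(p-4) - 40*(p-4)^3"
    by (simp add: power2_eq_square power3_eq_cube algebra_simps)
  also have "\<dots> = 64*(5-p)^3 + 96*(5-p)^2*(p-4) - 40*(p-4)^3"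
    unfolding rp by (simp add: power2_eq_square power3_eq_cube algebra_simps)
  also have "\<dots> = -8 * (p^3 - 12*p^2 + 60*p - 120)"
    by (simp add: power2_eq_square power3_eq_cube algebra_simps)
  also have "\<dots> = 0" using fp by simp
  finally have "(p-4)^3 * (r^3 + 6*r^2 - 40) = 0" .
  then show ?thesis using p4 unfolding r_def by simp
qed

end

lemma poly_decomp0:
  fixes E :: "real poly"
  assumes "E \<noteq> 0"
  obtains m E1 where "\<And>z. poly E z = z^m * poly E1 z" "poly E1 0 \<noteq> 0" "m \<le> degree E"
proof -
  obtain E1 where E1: "E = [:- 0, 1:] ^ order 0 E * E1" "\<not> [:- 0, 1:] dvd E1"
    using order_decomp[OF assms, of 0] by blast
  have "poly E z = z ^ order 0 E * poly E1 z" for z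
    by (subst E1(1)) (simp add: poly_monom)
  moreover have "poly E1 0 \<noteq> 0" using E1(2) poly_eq_0_iff_dvd[of E1 0] by simp
  moreover have "order 0 E \<le> degree E" using order_degree[OF assms] .
  ultimately show ?thesis using that by blast
qed

lemma poly_ev_nz:
  fixes E :: "real poly"
  assumes "E \<noteq> 0"
  shows "eventually (\<lambda>z. poly E z \<noteq> 0) (at 0)"
proof -
  obtain m E1 where d: "\<And>z. poly E z = z^m * poly E1 z" "poly E1 0 \<noteq> 0"
    using poly_decomp0[OF assms] by blast
  have "((\<lambda>z. poly E1 z) \<longlongrightarrow> poly E1 0) (at 0)" by (intro tendsto_intros)
  then have "eventually (\<lambda>z. poly E1 z \<noteq> 0) (at 0)"
    using d(2) by (rule tendsto_imp_eventually_ne)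
  moreover have "eventually (\<lambda>z. z \<noteq> (0::real)) (at 0)" by (rule eventually_neq_at_within)
  ultimately show ?thesis by eventually_elim (simp add: d(1))
qed

lemma poly_bigo_zero:
  fixes E :: "real poly"
  assumes deg: "degree E < n" and O: "(\<lambda>z. poly E z) \<in> O[at 0](\<lambda>z. z ^ n)"
  shows "E = 0"
proof (rule ccontr)
  assume nz: "E \<noteq> 0"
  obtain m E1 where d: "\<And>z. poly E z = z^m * poly E1 z" "poly E1 0 \<noteq> 0" "m \<le> degree E"
    using poly_decomp0[OF nz] by blast
  from O obtain c where c: "c > 0" "eventually (\<lambda>z. norm (poly E z) \<le> c * norm (z ^ n)) (at 0)"
    by (elim landau_o.bigE)
  have mn: "m < n" using d(3) deg by simp
  have ev: "eventually (\<lambda>z. \<bar>poly E1 z\<bar> \<le> c * \<bar>z\<bar> ^ (n - m)) (at (0::real))"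
    using c(2) eventually_neq_at_within[of 0 0 UNIV]
  proof eventually_elim
    case (elim z)
    have "\<bar>z\<bar>^m * \<bar>poly E1 z\<bar> \<le> c * \<bar>z\<bar>^n" using elim(1) by (simp add: d(1) abs_mult power_abs)
    also have "\<bar>z\<bar>^n = \<bar>z\<bar>^m * \<bar>z\<bar>^(n - m)" using mn by (simp add: power_add[symmetric])
    finally have "\<bar>z\<bar>^m * \<bar>poly E1 z\<bar> \<le> \<bar>z\<bar>^m * (c * \<bar>z\<bar>^(n - m))" by (simp add: ac_simps)
    moreover have "\<bar>z\<bar>^m > 0" using elim(2) by simp
    ultimately show ?case by (simp add: mult_le_cancel_left_pos)
  qed
  have l1: "((\<lambda>z. \<bar>poly E1 z\<bar>) \<longlongrightarrow> \<bar>poly E1 0\<bar>) (at (0::real))" by (intro tendsto_intros)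
  have l2: "((\<lambda>z. c * \<bar>z\<bar> ^ (n - m)) \<longlongrightarrow> c * \<bar>0\<bar> ^ (n - m)) (at (0::real))"
    by (intro tendsto_intros)
  have "\<bar>poly E1 0\<bar> \<le> c * \<bar>0\<bar> ^ (n - m)"
    by (rule tendsto_le[OF _ l2 l1 ev]) simp
  moreover have "(0::real) ^ (n - m) = 0" using mn by simp
  ultimately show False using d(2) by simp
qed

lemma psi_O: "(\<lambda>z. ratfun psi36_num psi36_den z - exp z) \<in> O[at 0](\<lambda>z. z ^ (6 + 1))"
  unfolding ratfun_psi by simp real_asymp

lemma psi_in_Pi: "(psi36_num, psi36_den) \<in> Pi_class 3 3 6"
  unfolding Pi_class_def using psi_O
  by (simp add: psi36_num_def psi36_den_def)

lemma pade_unique: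
  assumes "(P, Q) \<in> Pi_class 3 3 6"
  shows "ratfun P Q = ratfun psi36_num psi36_den" "is_pole P Q = is_pole psi36_num psi36_den"
proof -
  have dP: "degree P \<le> 3" and Qnz: "Q \<noteq> 0" and dQ: "degree Q \<le> 3"
    and O: "(\<lambda>z. ratfun P Q z - exp z) \<in> O[at 0](\<lambda>z. z ^ (6 + 1))"
    using assms unfolding Pi_class_def by auto
  define g where "g = gcd P Q"
  define P' where "P' = rnum P Q"
  define Q' where "Q' = rden P Q"
  have gnz: "g \<noteq> 0" unfolding g_def using Qnz by simp
  have hP: "P = P' * g" unfolding P'_def rnum_def g_def by simp
  have hQ: "Q = Q' * g" unfolding Q'_def rden_def g_def by simp
  have Q'nz: "Q' \<noteq> 0" using hQ Qnz by auto
  have dQ': "degree Q' \<le> 3" using dQ degree_mult_eq[OF Q'nz gnz] hQ by simp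
  have dP': "degree P' \<le> 3"
  proof (cases "P' = 0")
    case True then show ?thesis by simp
  next
    case False then show ?thesis using dP degree_mult_eq[OF False gnz] hP by simp
  qed
  have rf: "ratfun P Q z = poly P' z / poly Q' z" for z
    unfolding ratfun_def P'_def Q'_def ..
  have rpsi: "ratfun psi36_num psi36_den z = poly psi36_num z / poly psi36_den z" for z
    unfolding ratfun_def rnum_psi rden_psi ..
  define E where "E = P' * psi36_den - Q' * psi36_num"
  have degden: "degree psi36_den = 3" "degree psi36_num = 3"
    by (simp_all add: psi36_den_def psi36_num_def)
  have dE: "degree E < 7"
  proof -
    have "degree (P' * psi36_den) \<le> 6" using degree_mult_le[of P' psi36_den] dP' degden by simp
    moreover have "degree (Q' * psi36_num) \<le> 6" using degree_mult_le[of Q' psi36_num] dQ' degden by simp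
    ultimately have "degree E \<le> 6" unfolding E_def by (rule degree_diff_le)
    then show ?thesis by simp
  qed
  have Od: "(\<lambda>z. ratfun P Q z - ratfun psi36_num psi36_den z) \<in> O[at 0](\<lambda>z. z ^ (6 + 1))"
  proof -
    have "(\<lambda>z. (ratfun P Q z - exp z) - (ratfun psi36_num psi36_den z - exp z)) \<in> O[at 0](\<lambda>z. z ^ (6 + 1))"
      using O psi_O by (rule sum_in_bigo(2))
    then show ?thesis by simp
  qed
  define W where "W = Q' * psi36_den"
  have OW: "(\<lambda>z. poly W z) \<in> O[at 0](\<lambda>_. 1)"
    by (rule bigoI_tendsto[where c = "poly W 0"]) (auto intro!: tendsto_intros)
  have Oprod: "(\<lambda>z. poly W z * (ratfun P Q z - ratfun psi36_num psi36_den z)) \<in> O[at 0](\<lambda>z. 1 * z ^ (6 + 1))"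
    using OW Od by (rule landau_o.big.mult)
  have denz: "psi36_den \<noteq> 0" using degden by auto
  have ev: "eventually (\<lambda>z. poly W z * (ratfun P Q z - ratfun psi36_num psi36_den z) = poly E z) (at 0)"
    using poly_ev_nz[OF Q'nz] poly_ev_nz[OF denz]
  proof eventually_elim
    case (elim z)
    then show ?case unfolding W_def E_def rf rpsi by (simp add: field_simps)
  qed
  have "(\<lambda>z. poly E z) \<in> O[at 0](\<lambda>z. z ^ 7)"
    using landau_o.big.in_cong[OF ev] Oprod by simp
  then have "E = 0" using dE by (intro poly_bigo_zero) auto
  then have eq: "P' * psi36_den = Q' * psi36_num" unfolding E_def by simp
  have "coprime psi36_num psi36_den" by (rule gcd_eq_1_imp_coprime[OF coprime_psi])
  then have cop: "coprime psi36_den psi36_num" by (rule coprime_commute[THEN iffD1])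
  have "psi36_den dvd Q' * psi36_num" unfolding eq[symmetric] by simp
  then have "psi36_den dvd Q'" using cop by (simp add: coprime_dvd_mult_left_iff)
  then obtain c where c: "Q' = psi36_den * c" by (elim dvdE)
  have cnz: "c \<noteq> 0" using c Q'nz by auto
  have Pc: "P' = c * psi36_num"
  proof -
    have "psi36_den * P' = psi36_den * (c * psi36_num)" using eq c by (simp add: ac_simps)
    then show ?thesis using denz by simp
  qed
  have "degree c = 0" using dQ' degree_mult_eq[OF denz cnz] c degden by simp
  then obtain c0 where c0: "c = [:c0:]" by (elim degree_eq_zeroE)
  have c0nz: "c0 \<noteq> 0" using cnz c0 by simp
  have pP: "poly P' t = c0 * poly psi36_num t" for t unfolding Pc c0 by simp
  have pQ: "poly Q' t = c0 * poly psi36_den t" for t unfolding c c0 by simp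
  show "ratfun P Q = ratfun psi36_num psi36_den"
    by (rule ext) (simp add: rf rpsi pP pQ c0nz)
  show "is_pole P Q = is_pole psi36_num psi36_den"
    by (rule ext) (simp add: is_pole_def rden_psi pQ[unfolded Q'_def] c0nz)
qed

lemma radius_class:
  assumes h: "(P, Q) \<in> Pi_class 3 3 6"
  shows "radius_am P Q = radius_am psi36_num psi36_den"
proof -
  note e = pade_unique[OF h]
  show ?thesis unfolding radius_am_def abs_monotonic_at_def e ..
qed

lemma R_opt_eq: "R_opt 3 3 6 = radius_am psi36_num psi36_den"
proof -
  have "(\<lambda>(P, Q). radius_am P Q) ` Pi_class 3 3 6 = {radius_am psi36_num psi36_den}"
  proof
    show "(\<lambda>(P, Q). radius_am P Q) ` Pi_class 3 3 6 \<subseteq> {radius_am psi36_num psi36_den}"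
      using radius_class by auto
    show "{radius_am psi36_num psi36_den} \<subseteq> (\<lambda>(P, Q). radius_am P Q) ` Pi_class 3 3 6"
      using psi_in_Pi by force
  qed
  then show ?thesis unfolding R_opt_def by simp
qed

definition "cardano = -2 + root 3 4 * (root 3 (3 - sqrt 5) + root 3 (3 + sqrt 5))"

lemma cardano_root: "cardano ^ 3 + 6 * cardano ^ 2 - 40 = 0"
proof -
  define k where "k = root 3 4"
  define a where "a = root 3 (3 - sqrt 5)"
  define b where "b = root 3 (3 + sqrt 5)"
  define y where "y = k * (a + b)"
  have k3: "k^3 = 4" unfolding k_def by simp
  have a3: "a^3 = 3 - sqrt 5" unfolding a_def by (simp add: odd_real_root_pow)
  have b3: "b^3 = 3 + sqrt 5" unfolding b_def by (simp add: odd_real_root_pow)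
  have ab: "a * b = k"
  proof -
    have "(3 - sqrt 5) * (3 + sqrt 5) = (4::real)" by (simp add: algebra_simps)
    then show ?thesis unfolding a_def b_def k_def by (metis real_root_mult)
  qed
  have "y^3 = k^3 * (a^3 + b^3 + 3 * (a * b) * (a + b))"
    unfolding y_def by (simp add: power3_eq_cube algebra_simps)
  also have "\<dots> = 24 + 12 * y" unfolding k3 a3 b3 ab y_def by (simp add: algebra_simps)
  finally have y3: "y^3 = 24 + 12 * y" .
  have c: "cardano = y - 2" unfolding cardano_def y_def k_def a_def b_def by simp
  show ?thesis unfolding c using y3 by (simp add: power2_eq_square power3_eq_cube algebra_simps)
qed

lemma cubic_form: "(y::real)^3 + 6*y^2 - 40 = (y + 4)^2 * (y - 2) - 8"
  by (simp add: power2_eq_square power3_eq_cube algebra_simps)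

lemma cubic_root_gt2: "(y::real)^3 + 6*y^2 - 40 = 0 \<Longrightarrow> y > 2"
proof (rule ccontr)
  assume h: "y^3 + 6*y^2 - 40 = 0" "\<not> y > 2"
  have "(y + 4)^2 * (y - 2) \<le> 0" using h(2) by (intro mult_nonneg_nonpos) auto
  then show False using h(1) unfolding cubic_form by simp
qed

lemma cubic_unique:
  assumes "(y::real)^3 + 6*y^2 - 40 = 0" "(z::real)^3 + 6*z^2 - 40 = 0"
  shows "y = z"
proof (rule ccontr)
  assume ne: "y \<noteq> z"
  have y2: "y > 2" and z2: "z > 2" using assms cubic_root_gt2 by auto
  have mono: "(u + 4)^2 * (u - 2) < (v + 4)^2 * (v - 2)" if "2 < u" "u < v" for u v :: real
  proof -
    have "(u + 4)^2 < (v + 4)^2" using that by (intro power_strict_mono) auto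
    moreover have "u - 2 < v - 2" using that by simp
    ultimately show ?thesis using that by (intro mult_strict_mono) auto
  qed
  have "y < z \<or> z < y" using ne by auto
  then show False
    using mono[OF y2] mono[OF z2] assms unfolding cubic_form by force
qed

lemma cubic_iff: "(x::real)^3 + 6*x^2 - 40 = 0 \<longleftrightarrow> x = cardano"
  using cubic_unique[OF _ cardano_root] cardano_root by auto

lemma exists_p: "\<exists>p::real. p^3 - 12*p^2 + 60*p - 120 = 0 \<and> 464/100 < p \<and> p < 465/100"
proof -
  define f where "f = (\<lambda>p::real. p^3 - 12*p^2 + 60*p - 120)"
  have f1: "f (464/100) < 0" unfolding f_def by (simp add: power2_eq_square power3_eq_cube)
  have f2: "f (465/100) > 0" unfolding f_def by (simp add: power2_eq_square power3_eq_cube)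
  have "\<exists>x. 464/100 \<le> x \<and> x \<le> 465/100 \<and> f x = 0"
    using f1 f2 by (intro IVT) (auto simp: f_def intro!: continuous_intros)
  then obtain x where x: "464/100 \<le> x" "x \<le> 465/100" "f x = 0" by blast
  have "x \<noteq> 464/100" using x(3) f1 by (metis less_irrefl)
  moreover have "x \<noteq> 465/100" using x(3) f2 by (metis less_irrefl)
  ultimately have "x \<noteq> 464/100 \<and> x \<noteq> 465/100" by simp
  then show ?thesis using x unfolding f_def by auto
qed

theorem mainTheorem14:
  shows "(psi36_num, psi36_den) \<in> Pi_class 3 3 6
    \<and> radius_am psi36_num psi36_den =
        ereal (-2 + root 3 4 * (root 3 (3 - sqrt 5) + root 3 (3 + sqrt 5)))
    \<and> (\<forall>x::real. x ^ 3 + 6 * x ^ 2 - 40 = 0 \<longleftrightarrow>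
          x = -2 + root 3 4 * (root 3 (3 - sqrt 5) + root 3 (3 + sqrt 5)))
    \<and> R_opt 3 3 6 = ereal (-2 + root 3 4 * (root 3 (3 - sqrt 5) + root 3 (3 + sqrt 5)))"
proof -
  obtain p :: real where p: "p^3 - 12*p^2 + 60*p - 120 = 0" "464/100 < p" "p < 465/100"
    using exists_p by blast
  interpret pp p by unfold_locales (use p in auto)
  have c: "- x0 = cardano" using x0_cubic cubic_iff by blast
  have rad: "radius_am psi36_num psi36_den = ereal cardano" using radius_psi c by simp
  show ?thesis
    using psi_in_Pi rad cubic_iff R_opt_eq unfolding cardano_def by auto
qed

end
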